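(* Let $q\in(0,1)$ and let $a,b,\alpha,\beta$ be positive real numbers such that $\alpha+\beta t>1$ for all $t\in(0,\infty)$. Define \[ \phi(t)=\frac{(1-q)^{-b\beta t}e^{a\beta\gamma t}\,\Gamma(\alpha+\beta t)^a}{\Gamma_q(\alpha+\beta t)^b},\qquad t\in(0,\infty). \] Then $\phi$ is increasing on $(0,\infty)$, and for every $t\in(0,1)$, \[ \frac{(1-q)^{b\beta t}e^{-a\beta\gamma t}\,\Gamma(\alpha)^a}{\Gamma_q(\alpha)^b} <\frac{\Gamma(\alpha+\beta t)^a}{\Gamma_q(\alpha+\beta t)^b} <\frac{(1-q)^{b\beta(t-1)}e^{a\beta\gamma(1-t)}\,\Gamma(\alpha+\beta)^a}{\Gamma_q(\alpha+\beta)^b}. \]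
   Context: $\Gamma$ is Euler's Gamma function and $\gamma$ is the Euler–Mascheroni constant. For $q\in(0,1)$ and $t>0$, the $q$-Gamma function is $\Gamma_q(t)=(1-q)^{1-t}\prod_{n=1}^{\infty}\frac{1-q^n}{1-q^{t+n}}$. *)

theory Defs
  imports "HOL-Analysis.Analysis"
begin

definition qGamma :: "real \<Rightarrow> real \<Rightarrow> real" where
  "qGamma q t = (1 - q) powr (1 - t) *
     (\<Prod>n. (1 - q ^ (n + 1)) / (1 - q powr (t + real (n + 1))))"

end

theory Submission
  imports Defs
begin


lemma F_mono:
  fixes x y :: real assumes "1 \<le> x" "x \<le> y"
  shows "euler_mascheroni * x + ln_Gamma x \<le> euler_mascheroni * y + ln_Gamma y"
proof (rule DERIV_nonneg_imp_nondecreasing[OF assms(2)])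
  fix z :: real assume z: "x \<le> z" "z \<le> y"
  have "Digamma (1::real) \<le> Digamma z" by (rule Digamma_real_mono) (use z assms in auto)
  hence "0 \<le> euler_mascheroni + Digamma z" by simp
  moreover have "((\<lambda>x. euler_mascheroni * x + ln_Gamma x) has_real_derivative
      (euler_mascheroni + Digamma z)) (at z)"
    using z assms by (auto intro!: derivative_eq_intros)
  ultimately show "\<exists>d. ((\<lambda>x. euler_mascheroni * x + ln_Gamma x) has_real_derivative d) (at z) \<and> d \<ge> 0"
    by blast
qed

definition w :: "real \<Rightarrow> real \<Rightarrow> nat \<Rightarrow> real" where
  "w q x n = (1 - q ^ (n + 1)) / (1 - q powr (x + real (n + 1)))"

lemma w_bounds:
  assumes q: "0 < q" "q < 1" and x: "0 < x"
  shows "0 < w q x n" "w q x n < 1" "\<bar>w q x n - 1\<bar> \<le> q ^ (n+1) / (1 - q)"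
proof -
  have qn: "q powr (x + real (n+1)) < q ^ (n+1)"
  proof -
    have "q powr (x + real (n+1)) < q powr (real (n+1))"
      using q x by (intro powr_less_mono') auto
    moreover have "q powr (real (n+1)) = q ^ (n+1)" using q powr_realpow[of q "n+1"] by simp
    ultimately show ?thesis by linarith
  qed
  have qp: "0 < q powr (x + real (n+1))" using q by simp
  have qn1: "q ^ (n+1) \<le> q" using q by (simp add: power_le_one mult_le_cancel_left1 less_imp_le)
  have qn2: "q ^ (n+1) < 1" using q power_less_one_iff[of q "n+1"] by simp
  have d: "1 - q \<le> 1 - q powr (x + real (n+1))" using qn qn1 by linarith
  have dpos: "0 < 1 - q powr (x + real (n+1))" using qn qn2 by linarith
  show "0 < w q x n" unfolding w_def using qn2 dpos by simp
  show "w q x n < 1" unfolding w_def using qn dpos by simp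
  have "w q x n - 1 = (q powr (x + real (n+1)) - q ^ (n+1)) / (1 - q powr (x + real (n+1)))"
    unfolding w_def using dpos by (simp add: field_simps)
  hence "\<bar>w q x n - 1\<bar> = (q ^ (n+1) - q powr (x + real (n+1))) / (1 - q powr (x + real (n+1)))"
    using qn dpos by (simp add: abs_div_pos)
  also have "\<dots> \<le> q ^ (n+1) / (1 - q powr (x + real (n+1)))"
    using qp dpos by (intro divide_right_mono) auto
  also have "\<dots> \<le> q ^ (n+1) / (1 - q)"
    using q d by (intro divide_left_mono) auto
  finally show "\<bar>w q x n - 1\<bar> \<le> q ^ (n+1) / (1 - q)" .
qed

lemma w_conv:
  assumes q: "0 < q" "q < 1" and x: "0 < x"
  shows "convergent_prod (w q x)"
proof -
  have s: "summable (\<lambda>n. q ^ (n+1) / (1 - q))"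
    using q by (intro summable_divide summable_mult summable_geometric) auto
  have "summable (\<lambda>n. \<bar>w q x n - 1\<bar>)"
    by (rule summable_comparison_test[OF _ s]) (use w_bounds[OF q x] in auto)
  moreover have "w q x n - 1 \<noteq> -1" for n using w_bounds(1)[OF q x, of n] by auto
  ultimately have "convergent_prod (\<lambda>n. 1 + (w q x n - 1))"
    by (rule summable_imp_convergent_prod_real)
  thus ?thesis by simp
qed

lemma w_anti:
  assumes q: "0 < q" "q < 1" and x: "0 < x" "x < y"
  shows "w q y n < w q x n"
proof -
  have "q powr (y + real (n+1)) < q powr (x + real (n+1))"
    using q x by (intro powr_less_mono') auto
  moreover have "q powr (x + real (n+1)) < q powr 0"
    using q x by (intro powr_less_mono') auto
  hence "0 < 1 - q powr (x + real (n+1))" using q by simp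
  moreover
  have "0 < 1 - q ^ (n+1)" using q power_less_one_iff[of q "n+1"] by simp
  ultimately show ?thesis unfolding w_def
    by (intro divide_strict_left_mono) (auto intro: mult_pos_pos)
qed

lemma P_pos: assumes "0 < q" "q < 1" "0 < x" shows "0 < prodinf (w q x)"
  by (rule less_0_prodinf[OF w_conv[OF assms]]) (use w_bounds[OF assms] in auto)

lemma P_anti: assumes q: "0 < q" "q < 1" and x: "0 < x" "x < y"
  shows "prodinf (w q y) < prodinf (w q x)"
proof -
  have y: "0 < y" using x by simp
  show ?thesis
    by (rule has_prod_less[of "w q y" 0 "w q x"])
       (use w_anti[OF q x] w_conv[OF q x(1)] w_conv[OF q y] w_bounds[OF q y] 
        in \<open>auto intro: less_imp_le\<close>)
qed

lemma qGamma_eq: "qGamma q x = (1 - q) powr (1 - x) * prodinf (w q x)"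
  unfolding qGamma_def w_def by simp


theorem theorem3p8:
  fixes q a b \<alpha> \<beta> :: real and \<phi> :: "real \<Rightarrow> real"
  assumes hq: "0 < q" "q < 1"
    and ha: "0 < a" and hb: "0 < b" and h\<alpha>: "0 < \<alpha>" and h\<beta>: "0 < \<beta>"
    and hab: "\<forall>t>0. \<alpha> + \<beta> * t > 1"
    and h\<phi>: "\<And>t. \<phi> t = (1 - q) powr (- b * \<beta> * t) * exp (a * \<beta> * euler_mascheroni * t)
                 * Gamma (\<alpha> + \<beta> * t) powr a / qGamma q (\<alpha> + \<beta> * t) powr b"
  shows "strict_mono_on {0<..} \<phi> \<and>
    (\<forall>t\<in>{0<..<1}.
       (1 - q) powr (b * \<beta> * t) * exp (- a * \<beta> * euler_mascheroni * t)
         * Gamma \<alpha> powr a / qGamma q \<alpha> powr b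
       < Gamma (\<alpha> + \<beta> * t) powr a / qGamma q (\<alpha> + \<beta> * t) powr b
     \<and> Gamma (\<alpha> + \<beta> * t) powr a / qGamma q (\<alpha> + \<beta> * t) powr b
       < (1 - q) powr (b * \<beta> * (t - 1)) * exp (a * \<beta> * euler_mascheroni * (1 - t))
         * Gamma (\<alpha> + \<beta>) powr a / qGamma q (\<alpha> + \<beta>) powr b)"
proof -
  have a1: "1 \<le> \<alpha>"
  proof (rule ccontr)
    assume "\<not> 1 \<le> \<alpha>"
    hence "(1 - \<alpha>) / \<beta> > 0" using h\<beta> by simp
    hence "\<alpha> + \<beta> * ((1 - \<alpha>) / \<beta>) > 1" using hab by blast
    thus False using h\<beta> by simp
  qed
  have lq: "0 < 1 - q" using hq by simp
  define L where "L = ln (1 - q)"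
  define E where "E t = - b * \<beta> * t * L + a * \<beta> * euler_mascheroni * t
      + a * ln_Gamma (\<alpha> + \<beta> * t) - b * ((1 - (\<alpha> + \<beta> * t)) * L + ln (prodinf (w q (\<alpha> + \<beta> * t))))" for t
  have phiE: "\<phi> t = exp (E t)" if t: "0 \<le> t" for t
  proof -
    let ?x = "\<alpha> + \<beta> * t"
    have x: "0 < ?x" using h\<alpha> h\<beta> t by (simp add: add_pos_nonneg)
    have P: "0 < prodinf (w q ?x)" by (rule P_pos[OF hq x])
    have G: "Gamma ?x powr a = exp (a * ln_Gamma ?x)"
      using x by (simp add: powr_def Gamma_real_pos_exp)
    have Q: "qGamma q ?x powr b = exp (b * ((1 - ?x) * L + ln (prodinf (w q ?x))))"
      using P lq by (simp add: qGamma_eq powr_def L_def ln_mult)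
    have A: "(1 - q) powr (- b * \<beta> * t) = exp (- b * \<beta> * t * L)"
      using lq by (simp add: powr_def L_def)
    show ?thesis unfolding h\<phi> G Q A E_def
      by (simp add: exp_add exp_diff[symmetric] exp_add[symmetric] algebra_simps)
  qed
  have Emono: "E s < E t" if st: "0 \<le> s" "s < t" for s t
  proof -
    let ?x = "\<alpha> + \<beta> * s" and ?y = "\<alpha> + \<beta> * t"
    have xy: "?x < ?y" using st h\<beta> by simp
    have x1: "1 \<le> ?x" using a1 st h\<beta> by (simp add: add_increasing2)
    have F: "euler_mascheroni * ?x + ln_Gamma ?x \<le> euler_mascheroni * ?y + ln_Gamma ?y"
      by (rule F_mono) (use x1 xy in auto)
    have Px: "0 < prodinf (w q ?y)" by (rule P_pos[OF hq]) (use x1 xy in auto)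
    have "prodinf (w q ?y) < prodinf (w q ?x)" by (rule P_anti[OF hq]) (use x1 xy in auto)
    hence Pl: "ln (prodinf (w q ?y)) < ln (prodinf (w q ?x))" using Px by simp
    have "a * (euler_mascheroni * ?x + ln_Gamma ?x) \<le> a * (euler_mascheroni * ?y + ln_Gamma ?y)"
      using F ha by (simp add: mult_left_mono)
    moreover have "b * ln (prodinf (w q ?y)) < b * ln (prodinf (w q ?x))" using Pl hb by simp
    ultimately show ?thesis unfolding E_def by (simp add: algebra_simps)
  qed
  have mono0: "\<phi> s < \<phi> t" if "0 \<le> s" "s < t" for s t
    using phiE[of s] phiE[of t] Emono[of s t] that by simp
  have part1: "strict_mono_on {0<..} \<phi>"
    by (rule strict_mono_onI) (use mono0 in auto)
  show ?thesis
  proof (intro conjI part1 ballI)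
    fix t :: real assume t: "t \<in> {0<..<1}"
    define M where "M = (1 - q) powr (b * \<beta> * t) * exp (- a * \<beta> * euler_mascheroni * t)"
    have Mpos: "0 < M" unfolding M_def using lq by simp
    define A where "A = (1 - q) powr (b * \<beta> * t)"
    define B where "B = exp (- a * \<beta> * euler_mascheroni * t)"
    define A' where "A' = (1 - q) powr (- b * \<beta> * t)"
    define B' where "B' = exp (a * \<beta> * euler_mascheroni * t)"
    define G where "G s = Gamma (\<alpha> + \<beta> * s) powr a / qGamma q (\<alpha> + \<beta> * s) powr b" for s
    have AA: "A * A' = 1" unfolding A_def A'_def using lq by (simp add: powr_add[symmetric])
    have BB: "B * B' = 1" unfolding B_def B'_def by (simp add: exp_add[symmetric])
    have MA: "M * (A' * B') = 1" unfolding M_def A_def[symmetric] B_def[symmetric]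
      using AA BB by (metis mult.assoc mult.left_commute mult_1)
    have pt: "\<phi> s = (1 - q) powr (- b * \<beta> * s) * exp (a * \<beta> * euler_mascheroni * s) * G s" for s
      unfolding h\<phi> G_def by simp
    have phit: "M * \<phi> t = G t"
      using MA unfolding pt[of t] A'_def[symmetric] B'_def[symmetric] by (metis mult.assoc mult_1)
    have phi0: "\<phi> 0 = G 0" unfolding pt[of 0] using hq by simp
    have A1: "A * (1 - q) powr (- b * \<beta> * 1) = (1 - q) powr (b * \<beta> * (t - 1))"
      unfolding A_def by (subst powr_add[symmetric]) (simp add: algebra_simps)
    have B1: "B * exp (a * \<beta> * euler_mascheroni * 1) = exp (a * \<beta> * euler_mascheroni * (1 - t))"
      unfolding B_def by (subst exp_add[symmetric]) (simp add: algebra_simps)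
    have phi1: "M * \<phi> 1 = (1 - q) powr (b * \<beta> * (t - 1)) * exp (a * \<beta> * euler_mascheroni * (1 - t)) * G 1"
      unfolding pt[of 1] M_def A_def[symmetric] B_def[symmetric] A1[symmetric] B1[symmetric]
      by (simp only: ac_simps)
    have "M * \<phi> 0 < M * \<phi> t" using mono0[of 0 t] t Mpos by simp
    hence "M * G 0 < G t" using phit phi0 by simp
    thus "(1 - q) powr (b * \<beta> * t) * exp (- a * \<beta> * euler_mascheroni * t)
         * Gamma \<alpha> powr a / qGamma q \<alpha> powr b
       < Gamma (\<alpha> + \<beta> * t) powr a / qGamma q (\<alpha> + \<beta> * t) powr b"
      unfolding M_def G_def by simp
    have "M * \<phi> t < M * \<phi> 1" using mono0[of t 1] t Mpos by simp
    hence "G t < (1 - q) powr (b * \<beta> * (t - 1)) * exp (a * \<beta> * euler_mascheroni * (1 - t)) * G 1"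
      using phit phi1 by simp
    thus "Gamma (\<alpha> + \<beta> * t) powr a / qGamma q (\<alpha> + \<beta> * t) powr b
       < (1 - q) powr (b * \<beta> * (t - 1)) * exp (a * \<beta> * euler_mascheroni * (1 - t))
         * Gamma (\<alpha> + \<beta>) powr a / qGamma q (\<alpha> + \<beta>) powr b"
      unfolding G_def by simp
  qed
qed

end
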